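(* Let $X$ be a Tychonoff space. The following are equivalent: (1) $C_\gamma(X)$ is $\aleph_0$-bounded; (2) $C_m(X)$ is $\aleph_0$-bounded; (3) $C_u(X)$ is $\aleph_0$-bounded; (4) $C_u(X)$ is separable; (5) $X$ is compact and metrizable; (6) $C_\gamma(X)$ is second countable; (7) $C_\gamma(X)$ has a countable network; (8) $C_\gamma(X)$ is separable; (9) $C_\gamma(X)$ is ccc; (10) $C_m(X)$ is separable; (11) $C_m(X)$ is Lindelöf; (12) $C_m(X)$ is ccc.
   Context: $C(X)$ is the set of continuous real-valued functions on a Tychonoff space $X$, a topological group under pointwise addition with identity the zero function. $C_u(X)$: topology of uniform convergence, basic neighborhoods of $f$ are $\{g:|g(x)-f(x)|<\varepsilon\ \forall x\in X\}$, $\varepsilon>0$. $C_m(X)$: $m$-topology, basic neighborhoods $\{g:|g(x)-f(x)|<\varepsilon(x)\ \forall x\in X\}$ with $\varepsilon\in C(X)$ strictly positive. $C_\gamma(X)$: graph topology, basic neighborhoods $\{g:|g(x)-f(x)|<\eta(x)\ \forall x\in X\}$ with $\eta$ a strictly positive lower semicontinuous real-valued function on $X$. A topological group $G$ with identity $e$ is $\aleph_0$-bounded if for each neighborhood $U$ of $e$ there is a countable $A\subset G$ with $G=A\cdot U$. ccc means every family of pairwise disjoint nonempty open sets is countable. *)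

theory Defs
  imports "HOL-Analysis.Analysis"
begin

definition Tychonoff_space :: "'a topology \<Rightarrow> bool" where
  "Tychonoff_space X \<longleftrightarrow> completely_regular_space X \<and> Hausdorff_space X"

text \<open>C(X): continuous real functions on X, normalised to 0 outside topspace X
  (so that a function on the carrier is a unique HOL function).\<close>
definition CX :: "'a topology \<Rightarrow> ('a \<Rightarrow> real) set" where
  "CX X = {f. continuous_map X euclideanreal f \<and> (\<forall>x. x \<notin> topspace X \<longrightarrow> f x = 0)}"

definition strip :: "'a topology \<Rightarrow> ('a \<Rightarrow> real) \<Rightarrow> ('a \<Rightarrow> real) \<Rightarrow> ('a \<Rightarrow> real) set" where
  "strip X f e = {g \<in> CX X. \<forall>x\<in>topspace X. \<bar>g x - f x\<bar> < e x}"

definition lower_semicont :: "'a topology \<Rightarrow> ('a \<Rightarrow> real) \<Rightarrow> bool" where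
  "lower_semicont X h \<longleftrightarrow> (\<forall>t. openin X {x \<in> topspace X. t < h x})"

definition Cu :: "'a topology \<Rightarrow> ('a \<Rightarrow> real) topology" where
  "Cu X = topology_generated_by {strip X f (\<lambda>_. \<epsilon>) | f \<epsilon>. f \<in> CX X \<and> \<epsilon> > 0}"

definition Cm :: "'a topology \<Rightarrow> ('a \<Rightarrow> real) topology" where
  "Cm X = topology_generated_by {strip X f \<epsilon> | f \<epsilon>. f \<in> CX X \<and>
      continuous_map X euclideanreal \<epsilon> \<and> (\<forall>x\<in>topspace X. \<epsilon> x > 0)}"

definition Cgamma :: "'a topology \<Rightarrow> ('a \<Rightarrow> real) topology" where
  "Cgamma X = topology_generated_by {strip X f \<eta> | f \<eta>. f \<in> CX X \<and>
      lower_semicont X \<eta> \<and> (\<forall>x\<in>topspace X. \<eta> x > 0)}"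

definition aleph0_bounded :: "'a topology \<Rightarrow> ('a \<Rightarrow> real) topology \<Rightarrow> bool" where
  "aleph0_bounded X T \<longleftrightarrow>
     (\<forall>U. openin T U \<and> (\<lambda>_. 0) \<in> U \<longrightarrow>
        (\<exists>A. countable A \<and> A \<subseteq> CX X \<and> CX X = {(\<lambda>x. a x + u x) | a u. a \<in> A \<and> u \<in> U}))"

definition ccc_space :: "'b topology \<Rightarrow> bool" where
  "ccc_space T \<longleftrightarrow> (\<forall>\<U>. (\<forall>U\<in>\<U>. openin T U \<and> U \<noteq> {}) \<and> pairwise disjnt \<U> \<longrightarrow> countable \<U>)"

definition network :: "'b topology \<Rightarrow> 'b set set \<Rightarrow> bool" where
  "network T \<N> \<longleftrightarrow> (\<forall>N\<in>\<N>. N \<subseteq> topspace T) \<and>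
     (\<forall>U x. openin T U \<and> x \<in> U \<longrightarrow> (\<exists>N\<in>\<N>. x \<in> N \<and> N \<subseteq> U))"

definition countable_network :: "'b topology \<Rightarrow> bool" where
  "countable_network T \<longleftrightarrow> (\<exists>\<N>. countable \<N> \<and> network T \<N>)"

end

theory Submission
  imports Defs
begin


definition usep :: "'a topology \<Rightarrow> bool" where
  "usep X \<longleftrightarrow> (\<exists>D. countable D \<and> D \<subseteq> CX X \<and>
     (\<forall>f\<in>CX X. \<forall>r>0. \<exists>d\<in>D. \<forall>x\<in>topspace X. \<bar>f x - d x\<bar> < r))"

lemma CX_diff: "f \<in> CX X \<Longrightarrow> g \<in> CX X \<Longrightarrow> (\<lambda>x. f x - g x) \<in> CX X"
  by (auto simp: CX_def intro!: continuous_intros)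

lemma CX_add: "f \<in> CX X \<Longrightarrow> g \<in> CX X \<Longrightarrow> (\<lambda>x. f x + g x) \<in> CX X"
  by (auto simp: CX_def intro!: continuous_intros)

lemma CX_zero: "(\<lambda>_. 0) \<in> CX X"
  by (auto simp: CX_def)

lemma in_strip_self: "f \<in> CX X \<Longrightarrow> r > 0 \<Longrightarrow> f \<in> strip X f (\<lambda>_. r)"
  by (auto simp: strip_def)

lemma strip_sub: "strip X f e \<subseteq> CX X"
  by (auto simp: strip_def)

lemma lsc_const: "lower_semicont X (\<lambda>_. c)"
  unfolding lower_semicont_def
proof
  fix t
  have "{x \<in> topspace X. t < c} = (if t < c then topspace X else {})" by auto
  then show "openin X {x \<in> topspace X. t < c}" by simp
qed

lemma lsc_cont: "continuous_map X euclideanreal h \<Longrightarrow> lower_semicont X h"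
  unfolding lower_semicont_def
proof
  fix t assume "continuous_map X euclideanreal h"
  from openin_continuous_map_preimage[OF this, of "{t<..}"]
  show "openin X {x \<in> topspace X. t < h x}" by simp
qed

lemma gen_mono: "generate_topology_on S U \<Longrightarrow> S \<subseteq> S' \<Longrightarrow> generate_topology_on S' U"
  by (induction rule: generate_topology_on.induct) (auto intro: generate_topology_on.intros)

lemma topspace_Cu: "topspace (Cu X) = CX X"
  unfolding Cu_def topology_generated_by_topspace
proof (rule equalityI)
  show "\<Union> {strip X f (\<lambda>_. \<epsilon>) |f \<epsilon>. f \<in> CX X \<and> 0 < \<epsilon>} \<subseteq> CX X"
    using strip_sub by blast
  show "CX X \<subseteq> \<Union> {strip X f (\<lambda>_. \<epsilon>) |f \<epsilon>. f \<in> CX X \<and> 0 < \<epsilon>}"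
  proof
    fix f assume "f \<in> CX X"
    then have "f \<in> strip X f (\<lambda>_. 1)" "strip X f (\<lambda>_. 1) \<in> {strip X f (\<lambda>_. \<epsilon>) |f \<epsilon>. f \<in> CX X \<and> 0 < \<epsilon>}"
      by (auto intro: in_strip_self intro!: exI conjI[OF refl])
    then show "f \<in> \<Union> {strip X f (\<lambda>_. \<epsilon>) |f \<epsilon>. f \<in> CX X \<and> 0 < \<epsilon>}" by blast
  qed
qed

lemma topspace_Cm: "topspace (Cm X) = CX X"
  unfolding Cm_def topology_generated_by_topspace
proof (rule equalityI)
  show "\<Union> {strip X f \<epsilon> |f \<epsilon>. f \<in> CX X \<and> continuous_map X euclideanreal \<epsilon> \<and> (\<forall>x\<in>topspace X. 0 < \<epsilon> x)} \<subseteq> CX X"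
    using strip_sub by blast
  show "CX X \<subseteq> \<Union> {strip X f \<epsilon> |f \<epsilon>. f \<in> CX X \<and> continuous_map X euclideanreal \<epsilon> \<and> (\<forall>x\<in>topspace X. 0 < \<epsilon> x)}"
  proof
    fix f assume "f \<in> CX X"
    then have "f \<in> strip X f (\<lambda>_. 1)" "strip X f (\<lambda>_. 1) \<in> {strip X f \<epsilon> |f \<epsilon>. f \<in> CX X \<and> continuous_map X euclideanreal \<epsilon> \<and> (\<forall>x\<in>topspace X. 0 < \<epsilon> x)}"
      by (auto intro: in_strip_self intro!: exI conjI[OF refl])
    then show "f \<in> \<Union> {strip X f \<epsilon> |f \<epsilon>. f \<in> CX X \<and> continuous_map X euclideanreal \<epsilon> \<and> (\<forall>x\<in>topspace X. 0 < \<epsilon> x)}" by blast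
  qed
qed

lemma topspace_Cgamma: "topspace (Cgamma X) = CX X"
  unfolding Cgamma_def topology_generated_by_topspace
proof (rule equalityI)
  show "\<Union> {strip X f \<eta> |f \<eta>. f \<in> CX X \<and> lower_semicont X \<eta> \<and> (\<forall>x\<in>topspace X. 0 < \<eta> x)} \<subseteq> CX X"
    using strip_sub by blast
  show "CX X \<subseteq> \<Union> {strip X f \<eta> |f \<eta>. f \<in> CX X \<and> lower_semicont X \<eta> \<and> (\<forall>x\<in>topspace X. 0 < \<eta> x)}"
  proof
    fix f assume "f \<in> CX X"
    then have "f \<in> strip X f (\<lambda>_. 1)" "strip X f (\<lambda>_. 1) \<in> {strip X f \<eta> |f \<eta>. f \<in> CX X \<and> lower_semicont X \<eta> \<and> (\<forall>x\<in>topspace X. 0 < \<eta> x)}"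
      by (auto intro: in_strip_self lsc_const intro!: exI conjI[OF refl])
    then show "f \<in> \<Union> {strip X f \<eta> |f \<eta>. f \<in> CX X \<and> lower_semicont X \<eta> \<and> (\<forall>x\<in>topspace X. 0 < \<eta> x)}" by blast
  qed
qed

lemma Cu_open_Cm: "openin (Cu X) U \<Longrightarrow> openin (Cm X) U"
  unfolding Cu_def Cm_def openin_topology_generated_by_iff
  apply (erule gen_mono)
  apply clarify
  apply (rule exI, rule exI, rule conjI[OF refl])
  apply auto

  done

lemma Cm_open_Cgamma: "openin (Cm X) U \<Longrightarrow> openin (Cgamma X) U"
  unfolding Cgamma_def Cm_def openin_topology_generated_by_iff
  apply (erule gen_mono)
  apply clarify
  apply (rule exI, rule exI, rule conjI[OF refl])
  apply (auto intro: lsc_cont)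

  done

lemma Cu_strip_open: "f \<in> CX X \<Longrightarrow> r > 0 \<Longrightarrow> openin (Cu X) (strip X f (\<lambda>_. r))"
  unfolding Cu_def openin_topology_generated_by_iff
  by (rule generate_topology_on.Basis) blast

definition base_top :: "'a topology \<Rightarrow> ('a \<Rightarrow> real) topology \<Rightarrow> bool" where
  "base_top X T \<longleftrightarrow> topspace T = CX X \<and>
     (\<forall>f r. f \<in> CX X \<and> r > 0 \<longrightarrow> openin T (strip X f (\<lambda>_. r)))"

definition strip_prop :: "'a topology \<Rightarrow> ('a \<Rightarrow> real) topology \<Rightarrow> bool" where
  "strip_prop X T \<longleftrightarrow> (\<forall>U g. openin T U \<and> g \<in> U \<longrightarrow> (\<exists>r>0. strip X g (\<lambda>_. r) \<subseteq> U))"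

lemma base_Cu: "base_top X (Cu X)"
  by (simp add: base_top_def topspace_Cu Cu_strip_open)
lemma base_Cm: "base_top X (Cm X)"
  by (simp add: base_top_def topspace_Cm Cu_strip_open Cu_open_Cm)
lemma base_Cgamma: "base_top X (Cgamma X)"
  by (simp add: base_top_def topspace_Cgamma Cu_strip_open Cu_open_Cm Cm_open_Cgamma)

lemma compact_pos_lsc:
  assumes "compact_space X" "lower_semicont X h" "\<forall>x\<in>topspace X. h x > 0"
  shows "\<exists>\<delta>>0. \<forall>x\<in>topspace X. \<delta> < h x"
proof -
  define W where "W n = {x \<in> topspace X. 1 / (real n + 1) < h x}" for n :: nat
  have op: "openin X (W n)" for n using assms(2) unfolding W_def lower_semicont_def by blast
  have cov: "topspace X \<subseteq> \<Union>(range W)"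
  proof
    fix x assume x: "x \<in> topspace X"
    then have "h x > 0" using assms(3) by auto
    then obtain n where "inverse (real (Suc n)) < h x"
      using reals_Archimedean by blast
    then have "1 / (real n + 1) < h x" by (simp add: inverse_eq_divide add.commute)
    then show "x \<in> \<Union>(range W)" using x unfolding W_def by auto
  qed
  have "\<forall>U\<in>range W. openin X U" using op by blast
  then obtain F where F: "finite F" "F \<subseteq> range W" "topspace X \<subseteq> \<Union>F"
    using assms(1)[unfolded compact_space_alt, rule_format, of "range W"] cov
    by (metis op rangeE)
  obtain N where N: "finite N" "F = W ` N"
    using F by (meson finite_subset_image)
  define m where "m = Max (insert 0 N)"
  have "\<forall>x\<in>topspace X. 1 / (real m + 1) < h x"
  proof
    fix x assume "x \<in> topspace X"
    then obtain n where n: "n \<in> N" "x \<in> W n" using F N by auto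
    then have "n \<le> m" unfolding m_def using N by auto
    then have "1 / (real m + 1) \<le> 1 / (real n + 1)" by (simp add: frac_le)
    with n show "1 / (real m + 1) < h x" unfolding W_def by auto
  qed
  then show ?thesis by (intro exI[of _ "1 / (real m + 1)"]) auto
qed

lemma lsc_minus_cont:
  assumes "lower_semicont X h" "continuous_map X euclideanreal c"
  shows "lower_semicont X (\<lambda>x. h x - c x)"
  unfolding lower_semicont_def
proof
  fix t
  have eq: "{x \<in> topspace X. t < h x - c x} =
     (\<Union>s. {x \<in> topspace X. s < h x} \<inter> {x \<in> topspace X. c x \<in> {..<s - t}})"
  proof (rule equalityI; clarify?)
    fix x assume x: "x \<in> topspace X" "t < h x - c x"
    show "x \<in> (\<Union>s. {x \<in> topspace X. s < h x} \<inter> {x \<in> topspace X. c x \<in> {..<s - t}})"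
      using x by (intro UN_I[of "(h x + t + c x) / 2"]) (auto simp: field_simps)
  qed auto
  show "openin X {x \<in> topspace X. t < h x - c x}"
    unfolding eq
    using assms(1) openin_continuous_map_preimage[OF assms(2), of "{..<_}"]
    unfolding lower_semicont_def by (intro openin_Union) auto
qed

lemma strip_prop_Cgamma:
  assumes "compact_space X"
  shows "strip_prop X (Cgamma X)"
  unfolding strip_prop_def
proof (intro allI impI, elim conjE)
  fix U g assume "openin (Cgamma X) U" "g \<in> U"
  then have "generate_topology_on {strip X f \<eta> | f \<eta>. f \<in> CX X \<and>
      lower_semicont X \<eta> \<and> (\<forall>x\<in>topspace X. \<eta> x > 0)} U"
    unfolding Cgamma_def openin_topology_generated_by_iff by blast
  then show "\<exists>r>0. strip X g (\<lambda>_. r) \<subseteq> U" using \<open>g \<in> U\<close>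
  proof (induction arbitrary: g rule: generate_topology_on.induct)
    case Empty then show ?case by simp
  next
    case (Int a b)
    from Int.IH(1)[of g] Int.IH(2)[of g] Int.prems
    obtain r1 r2 where "r1 > 0" "strip X g (\<lambda>_. r1) \<subseteq> a" "r2 > 0" "strip X g (\<lambda>_. r2) \<subseteq> b"
      by auto
    then show ?case
      by (intro exI[of _ "min r1 r2"]) (auto simp: strip_def)
  next
    case (UN K)
    then obtain k where "k \<in> K" "g \<in> k" by auto
    with UN obtain r where "r > 0" "strip X g (\<lambda>_. r) \<subseteq> k" by blast
    with \<open>k \<in> K\<close> show ?case by blast
  next
    case (Basis s)
    then obtain f \<eta> where s: "s = strip X f \<eta>" "f \<in> CX X" "lower_semicont X \<eta>"
      "\<forall>x\<in>topspace X. \<eta> x > 0" by blast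
    have g: "g \<in> CX X" "\<forall>x\<in>topspace X. \<bar>g x - f x\<bar> < \<eta> x"
      using Basis.prems s unfolding strip_def by auto
    have "continuous_map X euclideanreal (\<lambda>x. \<bar>g x - f x\<bar>)"
      using g(1) s(2) unfolding CX_def by (auto intro!: continuous_intros)
    then have "lower_semicont X (\<lambda>x. \<eta> x - \<bar>g x - f x\<bar>)"
      by (rule lsc_minus_cont[OF s(3)])
    then obtain \<delta> where \<delta>: "\<delta> > 0" "\<forall>x\<in>topspace X. \<delta> < \<eta> x - \<bar>g x - f x\<bar>"
      using compact_pos_lsc[OF assms] g(2) by force
    have "strip X g (\<lambda>_. \<delta>) \<subseteq> s"
      unfolding s strip_def
    proof clarify
      fix h x assume h: "h \<in> CX X" "\<forall>x\<in>topspace X. \<bar>h x - g x\<bar> < \<delta>" "x \<in> topspace X"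
      then have "\<bar>h x - g x\<bar> < \<delta>" "\<delta> < \<eta> x - \<bar>g x - f x\<bar>" using \<delta> by auto
      then show "\<bar>h x - f x\<bar> < \<eta> x" by linarith
    qed
    with \<delta> show ?case by blast
  qed
qed

lemma strip_prop_coarser:
  "strip_prop X T \<Longrightarrow> (\<And>U. openin S U \<Longrightarrow> openin T U) \<Longrightarrow> strip_prop X S"
  unfolding strip_prop_def by blast

lemma strip_prop_Cm: "compact_space X \<Longrightarrow> strip_prop X (Cm X)"
  by (rule strip_prop_coarser[OF strip_prop_Cgamma Cm_open_Cgamma])

lemma strip_prop_Cu: "compact_space X \<Longrightarrow> strip_prop X (Cu X)"
  by (rule strip_prop_coarser[OF strip_prop_Cm Cu_open_Cm])




lemma usep_intro:
  assumes "\<And>k::nat. \<exists>A. countable A \<and> A \<subseteq> CX X \<and>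
     (\<forall>f\<in>CX X. \<exists>a\<in>A. \<forall>x\<in>topspace X. \<bar>f x - a x\<bar> < 1 / (real k + 1))"
  shows "usep X"
proof -
  obtain A where A: "\<And>k. countable (A k) \<and> A k \<subseteq> CX X \<and>
     (\<forall>f\<in>CX X. \<exists>a\<in>A k. \<forall>x\<in>topspace X. \<bar>f x - a x\<bar> < 1 / (real k + 1))"
    using assms by metis
  show ?thesis unfolding usep_def
  proof (intro exI[of _ "\<Union>k. A k"] conjI ballI allI impI)
    show "countable (\<Union>k. A k)" using A by auto
    show "(\<Union>k. A k) \<subseteq> CX X" using A by auto
    fix f and r :: real assume f: "f \<in> CX X" and r: "r > 0"
    obtain k where k: "inverse (real (Suc k)) < r" using reals_Archimedean r by blast
    then have k': "1 / (real k + 1) < r" by (simp add: inverse_eq_divide add.commute)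
    obtain a where "a \<in> A k" "\<forall>x\<in>topspace X. \<bar>f x - a x\<bar> < 1 / (real k + 1)"
      using A f by blast
    then show "\<exists>d\<in>\<Union>k. A k. \<forall>x\<in>topspace X. \<bar>f x - d x\<bar> < r"
      using k' by (intro bexI[of _ a]) force+
  qed
qed

lemma sep_imp_usep:
  assumes "base_top X T" "separable_space T"
  shows "usep X"
proof -
  obtain C where C: "countable C" "C \<subseteq> topspace T" "T closure_of C = topspace T"
    using assms(2) unfolding separable_space_def by blast
  have ts: "topspace T = CX X" using assms(1) unfolding base_top_def by blast
  show ?thesis unfolding usep_def
  proof (intro exI[of _ C] conjI ballI allI impI)
    show "countable C" "C \<subseteq> CX X" using C ts by auto
    fix f and r :: real assume f: "f \<in> CX X" and r: "r > 0"
    have "f \<in> T closure_of C" using C ts f by auto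
    moreover have "openin T (strip X f (\<lambda>_. r))" using assms(1) f r unfolding base_top_def by blast
    ultimately obtain d where "d \<in> C" "d \<in> strip X f (\<lambda>_. r)"
      using in_strip_self[OF f r] unfolding in_closure_of by blast
    then show "\<exists>d\<in>C. \<forall>x\<in>topspace X. \<bar>f x - d x\<bar> < r"
      unfolding strip_def by (auto simp: abs_minus_commute)
  qed
qed

lemma Lindelof_imp_usep:
  assumes "base_top X T" "Lindelof_space T"
  shows "usep X"
proof (rule usep_intro)
  fix k :: nat
  define r where "r = 1 / (real k + 1)"
  have r: "r > 0" unfolding r_def by auto
  have ts: "topspace T = CX X" using assms(1) unfolding base_top_def by blast
  let ?U = "(\<lambda>f. strip X f (\<lambda>_. r)) ` CX X"
  have "\<forall>U\<in>?U. openin T U" using assms(1) r unfolding base_top_def by blast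
  moreover have "\<Union>?U = topspace T"
  proof
    show "\<Union>?U \<subseteq> topspace T" unfolding ts by (rule Union_least) (use strip_sub in blast)
    show "topspace T \<subseteq> \<Union>?U"
    proof
      fix f assume "f \<in> topspace T"
      then have "f \<in> CX X" using ts by simp
      then show "f \<in> \<Union>?U" using in_strip_self[OF _ r] by blast
    qed
  qed
  ultimately obtain V where V: "countable V" "V \<subseteq> ?U" "\<Union>V = topspace T"
  proof -
    assume a1: "\<forall>U\<in>?U. openin T U" and a2: "\<Union>?U = topspace T"
    show ?thesis
      using Lindelof_spaceD[OF assms(2), of ?U] a1 a2 that by (metis (no_types, lifting))
  qed
  from countable_subset_image[THEN iffD1, OF conjI[OF V(1) V(2)]]
  obtain A where A: "countable A" "A \<subseteq> CX X" "V = (\<lambda>f. strip X f (\<lambda>_. r)) ` A"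
    by blast
  show "\<exists>A. countable A \<and> A \<subseteq> CX X \<and>
     (\<forall>f\<in>CX X. \<exists>a\<in>A. \<forall>x\<in>topspace X. \<bar>f x - a x\<bar> < 1 / (real k + 1))"
  proof (intro exI[of _ A] conjI ballI)
    fix f assume "f \<in> CX X"
    then have "f \<in> \<Union>V" using V(3) ts by simp
    then obtain a where "a \<in> A" "f \<in> strip X a (\<lambda>_. r)" using A(3) by blast
    then show "\<exists>a\<in>A. \<forall>x\<in>topspace X. \<bar>f x - a x\<bar> < 1 / (real k + 1)"
      unfolding strip_def r_def by auto
  qed (use A in auto)
qed

lemma ab_imp_usep:
  assumes "base_top X T" "aleph0_bounded X T"
  shows "usep X"
proof (rule usep_intro)
  fix k :: nat
  define r where "r = 1 / (real k + 1)"
  have r: "r > 0" unfolding r_def by auto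
  have op: "openin T (strip X (\<lambda>_. 0) (\<lambda>_. r))" using assms(1) r CX_zero unfolding base_top_def by blast
  have mem: "(\<lambda>_. 0) \<in> strip X (\<lambda>_. 0) (\<lambda>_. r)" using in_strip_self[OF CX_zero r] .
  from assms(2)[unfolded aleph0_bounded_def, rule_format, OF conjI[OF op mem]]
  obtain A where A: "countable A" "A \<subseteq> CX X"
    "CX X = {(\<lambda>x. a x + u x) | a u. a \<in> A \<and> u \<in> strip X (\<lambda>_. 0) (\<lambda>_. r)}"
    by blast
  show "\<exists>A. countable A \<and> A \<subseteq> CX X \<and>
     (\<forall>f\<in>CX X. \<exists>a\<in>A. \<forall>x\<in>topspace X. \<bar>f x - a x\<bar> < 1 / (real k + 1))"
  proof (intro exI[of _ A] conjI ballI)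
    fix f assume "f \<in> CX X"
    then obtain a u where "f = (\<lambda>x. a x + u x)" "a \<in> A" "u \<in> strip X (\<lambda>_. 0) (\<lambda>_. r)"
      using A(3) by blast
    then show "\<exists>a\<in>A. \<forall>x\<in>topspace X. \<bar>f x - a x\<bar> < 1 / (real k + 1)"
      unfolding strip_def r_def by (intro bexI[of _ a]) auto
  qed (use A in auto)
qed

lemma ccc_imp_usep:
  assumes "base_top X T" "ccc_space T"
  shows "usep X"
proof (rule usep_intro)
  fix k :: nat
  define r where "r = 1 / (2 * (real k + 1))"
  have r: "r > 0" unfolding r_def by auto
  define near where "near a b \<longleftrightarrow> (\<forall>x\<in>topspace X. \<bar>a x - b x\<bar> < 2 * r)" for a b :: "'a \<Rightarrow> real"
  define \<A> where "\<A> = {A. A \<subseteq> CX X \<and> (\<forall>a\<in>A. \<forall>b\<in>A. a \<noteq> b \<longrightarrow> \<not> near a b)}"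
  have "\<forall>C\<in>chains \<A>. \<Union>C \<in> \<A>"
  proof
    fix C assume C: "C \<in> chains \<A>"
    show "\<Union>C \<in> \<A>" unfolding \<A>_def
    proof (intro CollectI conjI ballI impI)
      show "\<Union>C \<subseteq> CX X" using C unfolding chains_def \<A>_def by blast
      fix a b assume ab: "a \<in> \<Union>C" "b \<in> \<Union>C" "a \<noteq> b"
      then obtain A B where AB: "A \<in> C" "B \<in> C" "a \<in> A" "b \<in> B" by blast
      then have "A \<subseteq> B \<or> B \<subseteq> A" using C unfolding chains_def chain_subset_def by blast
      then show "\<not> near a b" using AB ab C unfolding chains_def \<A>_def by blast
    qed
  qed
  then obtain M where M: "M \<in> \<A>" "\<forall>Y\<in>\<A>. M \<subseteq> Y \<longrightarrow> Y = M"
    using Zorn_Lemma by blast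
  define \<U> where "\<U> = (\<lambda>a. strip X a (\<lambda>_. r)) ` M"
  have MC: "M \<subseteq> CX X" using M unfolding \<A>_def by blast
  have inj: "inj_on (\<lambda>a. strip X a (\<lambda>_. r)) M"
  proof (rule inj_onI)
    fix a b assume ab: "a \<in> M" "b \<in> M" "strip X a (\<lambda>_. r) = strip X b (\<lambda>_. r)"
    then have "b \<in> strip X a (\<lambda>_. r)" using in_strip_self[of b X r] r MC by auto
    then have "near a b" unfolding near_def strip_def using r by (auto simp: abs_minus_commute)
    then show "a = b" using M(1) ab unfolding \<A>_def by blast
  qed
  have "countable \<U>"
    using assms(2) unfolding ccc_space_def
  proof (elim allE impE)
    show "(\<forall>U\<in>\<U>. openin T U \<and> U \<noteq> {}) \<and> pairwise disjnt \<U>"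
    proof
      show "\<forall>U\<in>\<U>. openin T U \<and> U \<noteq> {}"
        using assms(1) r MC in_strip_self[OF _ r] unfolding base_top_def \<U>_def by blast
      show "pairwise disjnt \<U>"
        unfolding pairwise_def \<U>_def
      proof clarify
        fix a b assume ab: "a \<in> M" "b \<in> M" "strip X a (\<lambda>_. r) \<noteq> strip X b (\<lambda>_. r)"
        then have "a \<noteq> b" by auto
        then have nn: "\<not> near a b" using M(1) ab unfolding \<A>_def by blast
        show "disjnt (strip X a (\<lambda>_. r)) (strip X b (\<lambda>_. r))"
          unfolding disjnt_def
        proof (rule ccontr)
          assume "strip X a (\<lambda>_. r) \<inter> strip X b (\<lambda>_. r) \<noteq> {}"
          then obtain h where h: "\<forall>x\<in>topspace X. \<bar>h x - a x\<bar> < r" "\<forall>x\<in>topspace X. \<bar>h x - b x\<bar> < r"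
            unfolding strip_def by blast
          have "near a b" unfolding near_def
          proof
            fix x assume "x \<in> topspace X"
            with h have "\<bar>h x - a x\<bar> < r" "\<bar>h x - b x\<bar> < r" by auto
            then show "\<bar>a x - b x\<bar> < 2 * r" by linarith
          qed
          with nn show False by blast
        qed
      qed
    qed
  qed
  then have cM: "countable M" using inj unfolding \<U>_def by (rule countable_image_inj_on)
  show "\<exists>A. countable A \<and> A \<subseteq> CX X \<and>
     (\<forall>f\<in>CX X. \<exists>a\<in>A. \<forall>x\<in>topspace X. \<bar>f x - a x\<bar> < 1 / (real k + 1))"
  proof (intro exI[of _ M] conjI ballI)
    fix f assume f: "f \<in> CX X"
    show "\<exists>a\<in>M. \<forall>x\<in>topspace X. \<bar>f x - a x\<bar> < 1 / (real k + 1)"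
    proof (cases "f \<in> M")
      case True then show ?thesis by (intro bexI[of _ f]) auto
    next
      case False
      have "insert f M \<notin> \<A>" using M(2) False by blast
      then obtain a where "a \<in> M" "near f a \<or> near a f"
        using M(1) f unfolding \<A>_def by blast
      then have "a \<in> M" "\<forall>x\<in>topspace X. \<bar>f x - a x\<bar> < 2 * r"
        unfolding near_def by (auto simp: abs_minus_commute)
      moreover have "2 * r = 1 / (real k + 1)" unfolding r_def by (simp add: field_simps)
      ultimately show ?thesis by metis
    qed
  qed (use cM MC in auto)
qed




lemma usep_second_countable:
  assumes "base_top X T" "strip_prop X T" "usep X"
  shows "second_countable T"
proof -
  obtain D where D: "countable D" "D \<subseteq> CX X"
    "\<And>f r. f \<in> CX X \<Longrightarrow> r > 0 \<Longrightarrow> \<exists>d\<in>D. \<forall>x\<in>topspace X. \<bar>f x - d x\<bar> < r"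
    using assms(3) unfolding usep_def by metis
  define B where "B = (\<lambda>(d, k::nat). strip X d (\<lambda>_. 1 / (real k + 1))) ` (D \<times> UNIV)"
  have "countable B" unfolding B_def using D(1) by auto
  moreover have "\<forall>V\<in>B. openin T V"
  proof
    fix V assume "V \<in> B"
    then obtain d k where "d \<in> D" "V = strip X d (\<lambda>_. 1 / (real k + 1))" unfolding B_def by auto
    moreover have "(1::real) / (real k + 1) > 0" by auto
    ultimately show "openin T V" using assms(1) D(2) unfolding base_top_def by blast
  qed
  moreover have "\<forall>U g. openin T U \<and> g \<in> U \<longrightarrow> (\<exists>V\<in>B. g \<in> V \<and> V \<subseteq> U)"
  proof (intro allI impI, elim conjE)
    fix U g assume U: "openin T U" "g \<in> U"
    obtain r where r: "r > 0" "strip X g (\<lambda>_. r) \<subseteq> U"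
      using assms(2) U unfolding strip_prop_def by blast
    have g: "g \<in> CX X" using U openin_subset assms(1) unfolding base_top_def by blast
    obtain k where k: "inverse (real (Suc k)) < r / 2" using reals_Archimedean r by (meson half_gt_zero)
    define e where "e = 1 / (real k + 1)"
    have e: "e > 0" "2 * e < r" using k unfolding e_def by (auto simp: inverse_eq_divide add.commute)
    obtain d where d: "d \<in> D" "\<forall>x\<in>topspace X. \<bar>g x - d x\<bar> < e" using D(3)[OF g e(1)] by blast
    have "strip X d (\<lambda>_. e) \<in> B" unfolding B_def e_def using d(1) by auto
    moreover have "g \<in> strip X d (\<lambda>_. e)" using g d unfolding strip_def by auto
    moreover have "strip X d (\<lambda>_. e) \<subseteq> strip X g (\<lambda>_. r)"
    proof
      fix h assume "h \<in> strip X d (\<lambda>_. e)"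
      then have h: "h \<in> CX X" "\<forall>x\<in>topspace X. \<bar>h x - d x\<bar> < e" unfolding strip_def by auto
      have "\<forall>x\<in>topspace X. \<bar>h x - g x\<bar> < r"
      proof
        fix x assume "x \<in> topspace X"
        then have "\<bar>h x - d x\<bar> < e" "\<bar>g x - d x\<bar> < e" using h d by auto
        then show "\<bar>h x - g x\<bar> < r" using e by linarith
      qed
      then show "h \<in> strip X g (\<lambda>_. r)" using h unfolding strip_def by auto
    qed
    ultimately show "\<exists>V\<in>B. g \<in> V \<and> V \<subseteq> U" using r by blast
  qed
  ultimately show ?thesis unfolding second_countable_def by blast
qed

lemma usep_ab:
  assumes "base_top X T" "strip_prop X T" "usep X"
  shows "aleph0_bounded X T"
  unfolding aleph0_bounded_def
proof (intro allI impI, elim conjE)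
  fix U assume U: "openin T U" "(\<lambda>_. 0) \<in> U"
  obtain r where r: "r > 0" "strip X (\<lambda>_. 0) (\<lambda>_. r) \<subseteq> U"
    using assms(2) U unfolding strip_prop_def by blast
  obtain D where D: "countable D" "D \<subseteq> CX X"
    "\<And>f r. f \<in> CX X \<Longrightarrow> r > 0 \<Longrightarrow> \<exists>d\<in>D. \<forall>x\<in>topspace X. \<bar>f x - d x\<bar> < r"
    using assms(3) unfolding usep_def by metis
  have UC: "U \<subseteq> CX X" using U openin_subset assms(1) unfolding base_top_def by blast
  show "\<exists>A. countable A \<and> A \<subseteq> CX X \<and> CX X = {(\<lambda>x. a x + u x) | a u. a \<in> A \<and> u \<in> U}"
  proof (intro exI[of _ D] conjI)
    show "countable D" "D \<subseteq> CX X" using D by auto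
    show "CX X = {(\<lambda>x. a x + u x) | a u. a \<in> D \<and> u \<in> U}"
    proof (rule equalityI; rule subsetI)
      fix f assume f: "f \<in> CX X"
      obtain d where d: "d \<in> D" "\<forall>x\<in>topspace X. \<bar>f x - d x\<bar> < r" using D(3)[OF f r(1)] by blast
      have "(\<lambda>x. f x - d x) \<in> CX X" using CX_diff f D(2) d(1) by blast
      then have "(\<lambda>x. f x - d x) \<in> strip X (\<lambda>_. 0) (\<lambda>_. r)" using d(2) unfolding strip_def by auto
      then have "(\<lambda>x. f x - d x) \<in> U" using r(2) by blast
      moreover have "f = (\<lambda>x. d x + (f x - d x))" by auto
      ultimately show "f \<in> {(\<lambda>x. a x + u x) | a u. a \<in> D \<and> u \<in> U}" using d(1)
        by (intro CollectI exI[of _ d] exI[of _ "\<lambda>x. f x - d x"]) auto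
    next
      fix f assume "f \<in> {(\<lambda>x. a x + u x) | a u. a \<in> D \<and> u \<in> U}"
      then obtain a u where "f = (\<lambda>x. a x + u x)" "a \<in> D" "u \<in> U" by blast
      then show "f \<in> CX X" using CX_add D(2) UC by blast
    qed
  qed
qed

lemma separable_imp_ccc:
  assumes "separable_space T"
  shows "ccc_space T"
  unfolding ccc_space_def
proof (intro allI impI, elim conjE)
  fix \<U> assume U: "\<forall>U\<in>\<U>. openin T U \<and> U \<noteq> {}" "pairwise disjnt \<U>"
  obtain C where C: "countable C" "C \<subseteq> topspace T" "T closure_of C = topspace T"
    using assms unfolding separable_space_def by blast
  have "\<forall>U\<in>\<U>. \<exists>c. c \<in> C \<and> c \<in> U"
  proof
    fix U assume "U \<in> \<U>"
    then obtain x where x: "x \<in> U" "openin T U" using U(1) by blast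
    then have "x \<in> T closure_of C" using C(3) openin_subset by blast
    then show "\<exists>c. c \<in> C \<and> c \<in> U" using x unfolding in_closure_of by blast
  qed
  then obtain c where c: "\<And>U. U \<in> \<U> \<Longrightarrow> c U \<in> C \<and> c U \<in> U" by metis
  have "inj_on c \<U>"
  proof (rule inj_onI)
    fix U V assume UV: "U \<in> \<U>" "V \<in> \<U>" "c U = c V"
    show "U = V"
    proof (rule ccontr)
      assume "U \<noteq> V"
      then have "disjnt U V" using U(2) UV unfolding pairwise_def by blast
      then show False using c[OF UV(1)] c[OF UV(2)] UV(3) unfolding disjnt_def by auto
    qed
  qed
  moreover have "c ` \<U> \<subseteq> C" using c by auto
  ultimately show "countable \<U>" using C(1)
    by (metis countable_image_inj_eq countable_subset)
qed

lemma second_countable_imp_network: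
  assumes "second_countable T"
  shows "countable_network T"
proof -
  obtain B where B: "countable B" "\<forall>V\<in>B. openin T V"
    "\<forall>U x. openin T U \<and> x \<in> U \<longrightarrow> (\<exists>V\<in>B. x \<in> V \<and> V \<subseteq> U)"
    using assms unfolding second_countable_def by blast
  have "network T B" unfolding network_def using B(2,3) openin_subset by blast
  then show ?thesis using B(1) unfolding countable_network_def by blast
qed

lemma network_imp_separable:
  assumes "countable_network T"
  shows "separable_space T"
proof -
  obtain N where N: "countable N" "network T N" using assms unfolding countable_network_def by blast
  define C where "C = (\<lambda>S. SOME x. x \<in> S) ` {S \<in> N. S \<noteq> {}}"
  have cs: "(SOME x. x \<in> S) \<in> S" if "S \<noteq> {}" for S :: "'a set"
    using that by (simp add: some_in_eq)
  have "countable C" unfolding C_def using N(1) by auto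
  moreover have Csub: "C \<subseteq> topspace T" unfolding C_def using N(2) cs unfolding network_def by blast
  moreover have "T closure_of C = topspace T"
  proof (rule equalityI)
    show "T closure_of C \<subseteq> topspace T" by (rule closure_of_subset_topspace)
    show "topspace T \<subseteq> T closure_of C"
    proof
      fix x assume x: "x \<in> topspace T"
      show "x \<in> T closure_of C" unfolding in_closure_of
      proof (intro conjI allI impI)
        show "x \<in> topspace T" by fact
        fix U assume "x \<in> U \<and> openin T U"
        then obtain S where S: "S \<in> N" "x \<in> S" "S \<subseteq> U" using N(2) unfolding network_def by blast
        then have "(SOME x. x \<in> S) \<in> C" unfolding C_def by auto
        moreover have "(SOME x. x \<in> S) \<in> U" using cs S by blast
        ultimately show "\<exists>y. y \<in> C \<and> y \<in> U" by blast
      qed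
    qed
  qed
  ultimately show ?thesis unfolding separable_space_def by blast
qed




lemma compact_bounded_fun:
  assumes "compact_space X" "continuous_map X euclideanreal f"
  shows "\<exists>B. \<forall>x\<in>topspace X. \<bar>f x\<bar> \<le> B"
proof -
  have "compactin euclideanreal (f ` topspace X)"
    using image_compactin assms unfolding compact_space_def by blast
  then have "bounded (f ` topspace X)" by (simp add: compact_imp_bounded)
  then show ?thesis unfolding bounded_real by auto
qed

lemma continuous_map_Min:
  assumes "finite F" "F \<noteq> {}" "\<And>c. c \<in> F \<Longrightarrow> continuous_map X euclideanreal (h c)"
  shows "continuous_map X euclideanreal (\<lambda>x. Min ((\<lambda>c. h c x) ` F))"
  using assms
proof (induction F rule: finite_ne_induct)
  case (singleton a) then show ?case by simp
next
  case (insert a F)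
  have eq: "(\<lambda>x. Min ((\<lambda>c. h c x) ` insert a F)) = (\<lambda>x. min (h a x) (Min ((\<lambda>c. h c x) ` F)))"
    using insert.hyps by (auto simp: Min_insert)
  show ?case unfolding eq using insert by (intro continuous_map_real_min) auto
qed

lemma P_imp_usep:
  assumes "compact_space X" "metrizable_space X"
  shows "usep X"
proof (cases "topspace X = {}")
  case True
  then show ?thesis unfolding usep_def
    by (intro exI[of _ "{\<lambda>_. 0}"]) (auto simp: CX_zero)
next
  case False
  obtain M d where Md: "Metric_space M d" "X = Metric_space.mtopology M d"
    using assms(2) unfolding metrizable_space_def by blast
  define m where "m = metric (M, d)"
  have Xm: "X = mtopology_of m" unfolding m_def using Md by (simp add: Metric_space.mtopology_of)
  have TM: "topspace X = mspace m" unfolding Xm by simp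
  have "Metric_space.mtotally_bounded (mspace m) (mdist m) (mspace m)"
    using assms(1) Metric_space.compact_space_eq_mcomplete_mtotally_bounded[OF Metric_space_mspace_mdist[of m]]
    unfolding Xm mtopology_of_def by blast
  then have tb: "\<And>e. e > 0 \<Longrightarrow> \<exists>K. finite K \<and> K \<subseteq> mspace m \<and> (\<forall>x\<in>mspace m. \<exists>c\<in>K. mdist m c x < e)"
    unfolding Metric_space.mtotally_bounded_def[OF Metric_space_mspace_mdist] 
    by (fastforce simp: Metric_space.in_mball[OF Metric_space_mspace_mdist])
  have "\<forall>n::nat. \<exists>K. finite K \<and> K \<subseteq> mspace m \<and>
      (\<forall>x\<in>mspace m. \<exists>c\<in>K. mdist m c x < 1 / (real n + 1))"
  proof
    fix n :: nat
    show "\<exists>K. finite K \<and> K \<subseteq> mspace m \<and> (\<forall>x\<in>mspace m. \<exists>c\<in>K. mdist m c x < 1 / (real n + 1))"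
      by (rule tb) auto
  qed
  then obtain F where F: "\<And>n::nat. finite (F n) \<and> F n \<subseteq> mspace m \<and>
      (\<forall>x\<in>mspace m. \<exists>c\<in>F n. mdist m c x < 1 / (real n + 1))"
    by metis
  have Fne: "F n \<noteq> {}" for n using F[of n] False TM by auto
  define G where "G n L q = (\<lambda>x. if x \<in> mspace m then Min ((\<lambda>c. q c + real L * mdist m x c) ` F n) else 0)"
    for n L :: nat and q :: "'a \<Rightarrow> real"
  define D where "D = (\<Union>n L. G n L ` (PiE (F n) (\<lambda>_. \<rat>)))"
  have contd: "continuous_map X euclideanreal (\<lambda>x. mdist m x c)" if "c \<in> mspace m" for c
    unfolding Xm using that by (intro continuous_map_mdist) auto
  have GC: "G n L q \<in> CX X" for n L q
  proof -
    have "continuous_map X euclideanreal (\<lambda>x. Min ((\<lambda>c. q c + real L * mdist m x c) ` F n))"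
    proof (rule continuous_map_Min)
      show "finite (F n)" "F n \<noteq> {}" using F[of n] Fne by auto
      fix c assume "c \<in> F n"
      then have "continuous_map X euclideanreal (\<lambda>x. mdist m x c)" using contd F[of n] by auto
      then show "continuous_map X euclideanreal (\<lambda>x. q c + real L * mdist m x c)"
        by (intro continuous_map_add continuous_map_real_mult_left) auto
    qed
    then have "continuous_map X euclideanreal (G n L q)"
      by (rule continuous_map_eq) (auto simp: G_def TM)
    then show ?thesis unfolding CX_def G_def by (auto simp: TM)
  qed
  show ?thesis unfolding usep_def
  proof (intro exI[of _ D] conjI ballI allI impI)
    have "countable (PiE (F n) (\<lambda>_. \<rat>))" for n
      using F[of n] by (intro countable_PiE) (auto simp: countable_rat)
    then show "countable D" unfolding D_def by auto
    show "D \<subseteq> CX X" unfolding D_def using GC by auto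
    fix f and \<epsilon> :: real assume f: "f \<in> CX X" and \<epsilon>: "\<epsilon> > 0"
    define e where "e = \<epsilon> / 4"
    have e: "e > 0" unfolding e_def using \<epsilon> by auto
    have fc: "continuous_map X euclideanreal f" using f unfolding CX_def by auto
    obtain B where B: "\<forall>x\<in>mspace m. \<bar>f x\<bar> \<le> B" using compact_bounded_fun[OF assms(1) fc] TM by auto
    have "uniformly_continuous_map m euclidean_metric f"
      using assms(1) fc by (intro continuous_imp_uniformly_continuous_map) (simp add: Xm)
    then have "\<exists>\<delta>>0. \<forall>x\<in>mspace m. \<forall>y\<in>mspace m. mdist m y x < \<delta> \<longrightarrow> dist (f y) (f x) < e"
      using e unfolding uniformly_continuous_map_def by simp
    then obtain \<delta> where \<delta>: "\<delta> > 0" "\<forall>x\<in>mspace m. \<forall>y\<in>mspace m. mdist m y x < \<delta> \<longrightarrow> \<bar>f y - f x\<bar> < e"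
      unfolding dist_real_def by blast
    obtain L :: nat where L: "(2 * B + e) / \<delta> \<le> real L" using real_arch_simple by blast
    have L': "2 * B + e \<le> real L * \<delta>" using L \<delta> by (simp add: field_simps)
    obtain n :: nat where n: "inverse (real (Suc n)) < min \<delta> (e / (real L + 1))"
    proof -
      have "min \<delta> (e / (real L + 1)) > 0" using \<delta> e by simp
      then show ?thesis using reals_Archimedean that by blast
    qed
    define \<eta> where "\<eta> = 1 / (real n + 1)"
    have \<eta>: "\<eta> > 0" "\<eta> < \<delta>" "\<eta> < e / (real L + 1)" using n unfolding \<eta>_def by (auto simp: inverse_eq_divide add.commute)
    have L\<eta>: "real L * \<eta> < e"
    proof -
      have "real L * \<eta> \<le> (real L + 1) * \<eta>" using \<eta> by (simp add: algebra_simps)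
      also have "\<dots> < e" using \<eta>(3) by (simp add: field_simps)
      finally show ?thesis .
    qed
    have "\<forall>c. \<exists>r. r \<in> \<rat> \<and> f c - e < r \<and> r < f c + e"
    proof
      fix c
      have "f c - e < f c + e" using e by simp
      from Rats_dense_in_real[OF this] show "\<exists>r. r \<in> \<rat> \<and> f c - e < r \<and> r < f c + e" by blast
    qed
    from choice[OF this] obtain q0 where q0all: "\<forall>c. q0 c \<in> \<rat> \<and> f c - e < q0 c \<and> q0 c < f c + e" by blast
    then have q0: "\<And>c. q0 c \<in> \<rat> \<and> f c - e < q0 c \<and> q0 c < f c + e" by blast
    define q where "q = restrict q0 (F n)"
    have qP: "q \<in> PiE (F n) (\<lambda>_. \<rat>)" unfolding q_def using q0 by auto
    have qF: "c \<in> F n \<Longrightarrow> q c = q0 c" for c unfolding q_def by auto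
    show "\<exists>g\<in>D. \<forall>x\<in>topspace X. \<bar>f x - g x\<bar> < \<epsilon>"
    proof (intro bexI[of _ "G n L q"] ballI)
      show "G n L q \<in> D" unfolding D_def using qP by blast
      fix x assume "x \<in> topspace X"
      then have x: "x \<in> mspace m" using TM by simp
      let ?S = "(\<lambda>c. q c + real L * mdist m x c) ` F n"
      have fin: "finite ?S" "?S \<noteq> {}" using F[of n] Fne by auto
      have Gx: "G n L q x = Min ?S" unfolding G_def using x by simp
      obtain c where c: "c \<in> F n" "mdist m c x < \<eta>" using F[of n] x unfolding \<eta>_def by blast
      have cM: "c \<in> mspace m" using c F[of n] by auto
      have "Min ?S \<le> q c + real L * mdist m x c" using fin c(1) by (intro Min_le) auto
      also have "\<dots> < f c + e + real L * \<eta>"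
      proof -
        have "real L * mdist m x c \<le> real L * \<eta>" using c(2) by (simp add: mdist_commute mult_left_mono)
        then show ?thesis using qF[OF c(1)] q0[of c] by linarith
      qed
      also have "\<dots> < f x + 3 * e"
      proof -
        have "\<bar>f c - f x\<bar> < e" using \<delta>(2) c(2) \<eta>(2) x cM by auto
        then show ?thesis using L\<eta> by linarith
      qed
      finally have up: "Min ?S < f x + 3 * e" .
      have low: "f x - 2 * e < Min ?S"
      proof -
        obtain c' where c': "c' \<in> F n" "Min ?S = q c' + real L * mdist m x c'"
          using Min_in[OF fin] by auto
        have c'M: "c' \<in> mspace m" using c' F[of n] by auto
        have qc': "f c' - e < q c'" using qF[OF c'(1)] q0[of c'] by simp
        show ?thesis
        proof (cases "mdist m c' x < \<delta>")
          case True
          then have "\<bar>f c' - f x\<bar> < e" using \<delta>(2) x c'M by auto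
          moreover have "0 \<le> real L * mdist m x c'" by simp
          ultimately show ?thesis using c'(2) qc' by linarith
        next
          case False
          then have "real L * \<delta> \<le> real L * mdist m x c'" by (simp add: mdist_commute mult_left_mono)
          moreover have "\<bar>f c'\<bar> \<le> B" "\<bar>f x\<bar> \<le> B" using B x c'M by auto
          ultimately show ?thesis using c'(2) qc' L' e by linarith
        qed
      qed
      show "\<bar>f x - G n L q x\<bar> < \<epsilon>" using up low Gx e unfolding e_def by linarith
    qed
  qed
qed





lemma gap_mono:
  fixes a :: "nat \<Rightarrow> real"
  assumes "\<forall>n. a n + 3 \<le> a (Suc n)"
  shows "n < m \<Longrightarrow> a n + 3 \<le> a m"
proof (induction m)
  case 0 then show ?case by simp
next
  case (Suc m)
  show ?case
  proof (cases "n = m")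
    case True then show ?thesis using assms by simp
  next
    case False
    then have "a n + 3 \<le> a m" using Suc by simp
    then show ?thesis using assms[rule_format, of m] by linarith
  qed
qed

lemma gap_lin:
  fixes a :: "nat \<Rightarrow> real"
  assumes "\<forall>n. a n + 3 \<le> a (Suc n)"
  shows "a 0 + 3 * real n \<le> a n"
proof (induction n)
  case 0 then show ?case by simp
next
  case (Suc n) then show ?case using assms[rule_format, of n] by simp
qed

lemma tent_cont:
  fixes a v :: "nat \<Rightarrow> real"
  assumes gap: "\<forall>n. a n + 3 \<le> a (Suc n)"
  shows "continuous_on UNIV (\<lambda>t. \<Sum>n\<in>{n. \<bar>t - a n\<bar> < 1}. v n * (1 - \<bar>t - a n\<bar>))"
proof -
  let ?g = "\<lambda>t. \<Sum>n\<in>{n. \<bar>t - a n\<bar> < 1}. v n * (1 - \<bar>t - a n\<bar>)"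
  have "isCont ?g t0" for t0
  proof -
    define S0 where "S0 = {n. \<bar>t0 - a n\<bar> < 2}"
    have "S0 \<subseteq> {..nat \<lceil>(t0 + 2 - a 0) / 3\<rceil>}"
    proof
      fix n assume "n \<in> S0"
      then have "a n < t0 + 2" unfolding S0_def by auto
      moreover have "a 0 + 3 * real n \<le> a n" using gap_lin[OF gap] .
      ultimately have "real n \<le> (t0 + 2 - a 0) / 3" by simp
      also have "\<dots> \<le> real (nat \<lceil>(t0 + 2 - a 0) / 3\<rceil>)" by (rule real_nat_ceiling_ge)
      finally show "n \<in> {..nat \<lceil>(t0 + 2 - a 0) / 3\<rceil>}" by simp
    qed
    then have finS0: "finite S0" by (rule finite_subset) simp
    have loc: "?g t = (\<Sum>n\<in>S0. v n * max 0 (1 - \<bar>t - a n\<bar>))" if "dist t t0 < 1" for t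
    proof -
      have sub: "{n. \<bar>t - a n\<bar> < 1} \<subseteq> S0"
        using that unfolding S0_def dist_real_def by auto
      have "(\<Sum>n\<in>{n. \<bar>t - a n\<bar> < 1}. v n * (1 - \<bar>t - a n\<bar>))
          = (\<Sum>n\<in>{n. \<bar>t - a n\<bar> < 1}. v n * max 0 (1 - \<bar>t - a n\<bar>))"
        by (rule sum.cong) auto
      also have "\<dots> = (\<Sum>n\<in>S0. v n * max 0 (1 - \<bar>t - a n\<bar>))"
        by (rule sum.mono_neutral_left[OF finS0 sub]) auto
      finally show ?thesis .
    qed
    have ev: "eventually (\<lambda>t. ?g t = (\<Sum>n\<in>S0. v n * max 0 (1 - \<bar>t - a n\<bar>))) (nhds t0)"
      unfolding eventually_nhds_metric using loc by (intro exI[of _ 1]) auto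
    have "isCont (\<lambda>t. \<Sum>n\<in>S0. v n * max 0 (1 - \<bar>t - a n\<bar>)) t0"
      by (intro continuous_intros)
    then show "isCont ?g t0" using isCont_cong[OF ev] by blast
  qed
  then show ?thesis by (simp add: continuous_on_eq_continuous_at)
qed

lemma tent_at:
  fixes a v :: "nat \<Rightarrow> real"
  assumes gap: "\<forall>n. a n + 3 \<le> a (Suc n)"
  shows "(\<Sum>n\<in>{n. \<bar>a k - a n\<bar> < 1}. v n * (1 - \<bar>a k - a n\<bar>)) = v k"
proof -
  have "{n. \<bar>a k - a n\<bar> < 1} = {k}"
  proof (rule equalityI; clarify)
    fix n assume n: "\<bar>a k - a n\<bar> < 1"
    show "n = k"
    proof (rule ccontr)
      assume "n \<noteq> k"
      then have "n < k \<or> k < n" by auto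
      then show False using gap_mono[OF gap, of n k] gap_mono[OF gap, of k n] n by auto
    qed
  qed auto
  then show ?thesis by simp
qed

lemma usep_pseudo:
  assumes "usep X" "continuous_map X euclideanreal f"
  shows "\<exists>B. \<forall>x\<in>topspace X. \<bar>f x\<bar> \<le> B"
proof (rule ccontr)
  assume nb: "\<not> (\<exists>B. \<forall>x\<in>topspace X. \<bar>f x\<bar> \<le> B)"
  define h where "h x = \<bar>f x\<bar>" for x
  have hc: "continuous_map X euclideanreal h" unfolding h_def using assms(2) by (intro continuous_intros)
  have "\<forall>B. \<exists>x. x \<in> topspace X \<and> B < h x" using nb unfolding h_def by (auto simp: not_le)
  from choice[OF this] obtain s where s: "\<And>B. s B \<in> topspace X \<and> B < h (s B)" by blast
  define xs where "xs = rec_nat (s 0) (\<lambda>_ y. s (h y + 3))"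
  have xs0: "xs 0 = s 0" and xsS: "xs (Suc k) = s (h (xs k) + 3)" for k unfolding xs_def by simp_all
  have xsT: "xs k \<in> topspace X" for k by (cases k) (auto simp: xs0 xsS s)
  define a where "a k = h (xs k)" for k
  have gap: "\<forall>n. a n + 3 \<le> a (Suc n)" unfolding a_def using s xsS by (metis less_imp_le)
  obtain D where D: "countable D" "D \<subseteq> CX X"
    "\<And>f r. f \<in> CX X \<Longrightarrow> r > 0 \<Longrightarrow> \<exists>d\<in>D. \<forall>x\<in>topspace X. \<bar>f x - d x\<bar> < r"
    using assms(1) unfolding usep_def by metis
  have Dne: "D \<noteq> {}" using D(3)[OF CX_zero, of 1] by auto
  define dd where "dd = from_nat_into D"
  define v where "v k = dd k (xs k) + 1" for k
  define g where "g t = (\<Sum>n\<in>{n. \<bar>t - a n\<bar> < 1}. v n * (1 - \<bar>t - a n\<bar>))" for t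
  have gc: "continuous_map euclideanreal euclideanreal g"
    unfolding g_def using tent_cont[OF gap, of v] by simp
  define F where "F x = (if x \<in> topspace X then g (h x) else 0)" for x
  have "continuous_map X euclideanreal (\<lambda>x. g (h x))"
    using continuous_map_compose[OF hc gc] by (simp add: o_def)
  then have "continuous_map X euclideanreal F"
    by (rule continuous_map_eq) (simp add: F_def)
  then have FC: "F \<in> CX X" unfolding CX_def F_def by auto
  obtain d where d: "d \<in> D" "\<forall>x\<in>topspace X. \<bar>F x - d x\<bar> < 1" using D(3)[OF FC, of 1] by auto
  obtain k where k: "dd k = d" using from_nat_into_surj[OF D(1) d(1)] unfolding dd_def by blast
  have "F (xs k) = v k" unfolding F_def g_def using xsT tent_at[OF gap, of v k] by (simp add: a_def)
  then have "F (xs k) - d (xs k) = 1" unfolding v_def k by simp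
  moreover have "\<bar>F (xs k) - d (xs k)\<bar> < 1" using d(2) xsT[of k] by blast
  ultimately show False by simp
qed




lemma sepfun:
  assumes "Tychonoff_space X" "closedin X C" "x \<in> topspace X" "x \<notin> C"
  shows "\<exists>\<phi>\<in>CX X. \<phi> x = 0 \<and> (\<forall>y\<in>C. \<phi> y = 1)"
proof -
  obtain f :: "'a \<Rightarrow> real" where f: "continuous_map X (top_of_set {0..1}) f" "f x = 0" "f ` C \<subseteq> {1}"
    using assms unfolding Tychonoff_space_def completely_regular_space_def by blast
  have fc: "continuous_map X euclideanreal f"
    using f(1) continuous_map_in_subtopology by blast
  define \<phi> where "\<phi> z = (if z \<in> topspace X then f z else 0)" for z
  have "continuous_map X euclideanreal \<phi>" using fc by (rule continuous_map_eq) (simp add: \<phi>_def)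
  then have "\<phi> \<in> CX X" unfolding CX_def \<phi>_def by auto
  moreover have "\<phi> x = 0" using f(2) assms(3) by (simp add: \<phi>_def)
  moreover have "\<forall>y\<in>C. \<phi> y = 1" using f(3) closedin_subset[OF assms(2)] by (auto simp: \<phi>_def)
  ultimately show ?thesis by blast
qed

lemma usep_imp_P:
  assumes T: "Tychonoff_space X" and U: "usep X"
  shows "compact_space X \<and> metrizable_space X"
proof -
  obtain D where D: "countable D" "D \<subseteq> CX X"
    "\<And>f r. f \<in> CX X \<Longrightarrow> r > 0 \<Longrightarrow> \<exists>d\<in>D. \<forall>x\<in>topspace X. \<bar>f x - d x\<bar> < r"
    using U unfolding usep_def by metis
  have Dne: "D \<noteq> {}" using D(3)[OF CX_zero, of 1] by auto
  define dd where "dd = from_nat_into D"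
  have ddC: "dd n \<in> CX X" for n unfolding dd_def using from_nat_into[OF Dne] D(2) by blast
  have ddc: "continuous_map X euclideanreal (dd n)" for n using ddC[of n] unfolding CX_def by blast
  have appr: "\<exists>n. \<forall>x\<in>topspace X. \<bar>f x - dd n x\<bar> < r" if fr: "f \<in> CX X" "r > 0" for f r
  proof -
    obtain d where "d \<in> D" "\<forall>x\<in>topspace X. \<bar>f x - d x\<bar> < r" using D(3)[OF fr] by blast
    then show ?thesis using from_nat_into_surj[OF D(1)] unfolding dd_def by metis
  qed
  define e where "e x = (\<lambda>n. dd n x)" for x
  have ec: "continuous_map X euclidean e"
    unfolding euclidean_product_topology[symmetric] continuous_map_componentwise_UNIV e_def
    using ddc by blast
  define S where "S = e ` topspace X"
  have sep: "\<exists>n. \<forall>y\<in>topspace X. \<bar>dd n y - dd n x\<bar> < 1/3 \<longrightarrow> y \<in> W"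
    if Wx: "openin X W" "x \<in> W" for W x
  proof -
    have "closedin X (topspace X - W)" using Wx(1) by blast
    then obtain \<phi> where \<phi>: "\<phi> \<in> CX X" "\<phi> x = 0" "\<forall>y\<in>topspace X - W. \<phi> y = 1"
      using sepfun[OF T, of "topspace X - W" x] Wx openin_subset by blast
    obtain n where n: "\<forall>x\<in>topspace X. \<bar>\<phi> x - dd n x\<bar> < 1/3" using appr[OF \<phi>(1), of "1/3"] by auto
    show ?thesis
    proof (intro exI[of _ n] ballI impI)
      fix y assume y: "y \<in> topspace X" "\<bar>dd n y - dd n x\<bar> < 1/3"
      have "x \<in> topspace X" using Wx openin_subset by blast
      then have "\<bar>\<phi> x - dd n x\<bar> < 1/3" "\<bar>\<phi> y - dd n y\<bar> < 1/3" using n y by auto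
      then have "\<phi> y \<noteq> 1" using \<phi>(2) y(2) by linarith
      then show "y \<in> W" using \<phi>(3) y(1) by blast
    qed
  qed
  have inj: "inj_on e (topspace X)"
  proof (rule inj_onI)
    fix x y assume xy: "x \<in> topspace X" "y \<in> topspace X" "e x = e y"
    show "x = y"
    proof (rule ccontr)
      assume "x \<noteq> y"
      have "Hausdorff_space X" using T unfolding Tychonoff_space_def by blast
      then have "t1_space X" by (rule Hausdorff_imp_t1_space)
      then have "\<forall>z\<in>topspace X. closedin X {z}" by (simp only: t1_space_closedin_singleton)
      then have "closedin X {y}" using xy(2) by simp
      then have op: "openin X (topspace X - {y})" by (simp add: closedin_def)
      have "x \<in> topspace X - {y}" using xy(1) \<open>x \<noteq> y\<close> by blast
      from sep[OF op this] obtain n where n: "\<forall>z\<in>topspace X. \<bar>dd n z - dd n x\<bar> < 1/3 \<longrightarrow> z \<in> topspace X - {y}"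
        by blast
      have "dd n y = dd n x" using fun_cong[OF xy(3), of n] unfolding e_def by simp
      then have "\<bar>dd n y - dd n x\<bar> < 1/3" by simp
      then have "y \<in> topspace X - {y}" using n xy(2) by blast
      then show False by blast
    qed
  qed
  have om: "open_map X (subtopology euclidean S) e"
    unfolding open_map_def
  proof (intro allI impI)
    fix W assume W: "openin X W"
    show "openin (subtopology euclidean S) (e ` W)"
      unfolding openin_subopen[of _ "e ` W"]
    proof
      fix q assume "q \<in> e ` W"
      then obtain x where x: "x \<in> W" "q = e x" by blast
      obtain n where n: "\<forall>y\<in>topspace X. \<bar>dd n y - dd n x\<bar> < 1/3 \<longrightarrow> y \<in> W"
        using sep[OF W x(1)] by blast
      define V where "V = {p :: nat \<Rightarrow> real. \<bar>p n - dd n x\<bar> < 1/3}"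
      have "continuous_on UNIV (\<lambda>p::nat\<Rightarrow>real. \<bar>p n - dd n x\<bar>)"
        by (intro continuous_on_rabs continuous_on_diff continuous_on_const continuous_on_product_coordinates)
      from open_Collect_less[OF this continuous_on_const[of UNIV "1/3::real"]]
      have "open V" unfolding V_def .
      then have "openin euclidean V" by (metis open_openin)
      then have "openin (subtopology euclidean S) (V \<inter> S)" by (rule openin_subtopology_Int)
      moreover have "q \<in> V \<inter> S" using x W openin_subset unfolding V_def S_def e_def by auto
      moreover have "V \<inter> S \<subseteq> e ` W"
      proof
        fix p assume "p \<in> V \<inter> S"
        then obtain y where y: "y \<in> topspace X" "p = e y" "\<bar>dd n y - dd n x\<bar> < 1/3"
          unfolding V_def S_def e_def by auto
        then have "y \<in> W" using n by blast
        then show "p \<in> e ` W" using y(2) by blast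
      qed
      ultimately show "\<exists>T. openin (subtopology euclidean S) T \<and> q \<in> T \<and> T \<subseteq> e ` W" by blast
    qed
  qed
  have hm: "homeomorphic_map X (subtopology euclidean S) e"
  proof (rule bijective_open_imp_homeomorphic_map)
    show "continuous_map X (subtopology euclidean S) e"
      using ec unfolding continuous_map_in_subtopology S_def by auto
    show "open_map X (subtopology euclidean S) e" by (rule om)
    show "e ` topspace X = topspace (subtopology euclidean S)" unfolding S_def by simp
    show "inj_on e (topspace X)" by (rule inj)
  qed
  then have hs: "X homeomorphic_space (subtopology euclidean S)"
    by (rule homeomorphic_map_imp_homeomorphic_space)
  have met: "metrizable_space X"
    using hs homeomorphic_metrizable_space metrizable_space_subtopology metrizable_space_euclidean by blast
  have "\<forall>n. \<exists>b. \<forall>x\<in>topspace X. \<bar>dd n x\<bar> \<le> b" using usep_pseudo[OF U ddc] by blast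
  from choice[OF this] obtain B where B: "\<And>n x. x \<in> topspace X \<Longrightarrow> \<bar>dd n x\<bar> \<le> B n" by blast
  define K where "K = PiE UNIV (\<lambda>n. {- B n..B n})"
  have "compactin (product_topology (\<lambda>_. euclideanreal) UNIV) K"
    unfolding K_def compactin_PiE by auto
  then have cK: "compact K" unfolding euclidean_product_topology by simp
  have SK: "S \<subseteq> K"
  proof
    fix q assume "q \<in> S"
    then obtain x where x: "x \<in> topspace X" "q = e x" unfolding S_def by blast
    have "\<forall>n. q n \<in> {- B n..B n}"
    proof
      fix n
      have "\<bar>dd n x\<bar> \<le> B n" using B[OF x(1)] .
      then show "q n \<in> {- B n..B n}" unfolding x(2) e_def by (simp add: abs_le_iff)
    qed
    then show "q \<in> K" unfolding K_def by (simp add: PiE_iff)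
  qed
  have "closure S \<subseteq> S"
  proof
    fix p assume p: "p \<in> closure S"
    show "p \<in> S"
    proof (rule ccontr)
      assume pS: "p \<notin> S"
      define \<psi> where "\<psi> x = dist (e x) p" for x
      have dc: "continuous_map euclidean euclideanreal (\<lambda>y::nat\<Rightarrow>real. dist y p)"
        using continuous_map_iff_continuous[of UNIV "\<lambda>y::nat\<Rightarrow>real. dist y p"]
        by (simp add: continuous_on_dist)
      have \<psi>c: "continuous_map X euclideanreal \<psi>"
        using continuous_map_compose[OF ec dc] unfolding \<psi>_def o_def by simp
      have \<psi>pos: "\<psi> x \<noteq> 0" if "x \<in> topspace X" for x
        using pS that unfolding \<psi>_def S_def by auto
      have "continuous_map X euclideanreal (\<lambda>x. inverse (\<psi> x))"
        using \<psi>c \<psi>pos by (intro continuous_map_real_inverse)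
      then obtain C where C: "\<forall>x\<in>topspace X. \<bar>inverse (\<psi> x)\<bar> \<le> C"
        using usep_pseudo[OF U] by blast
      have Cpos: "inverse (\<bar>C\<bar> + 1) > 0" by simp
      from p[unfolded closure_approachable, rule_format, OF Cpos]
      obtain y where y: "y \<in> S" "dist y p < inverse (\<bar>C\<bar> + 1)" by blast
      then obtain x where x: "x \<in> topspace X" "y = e x" unfolding S_def by blast
      have ps: "0 < \<psi> x" using \<psi>pos[OF x(1)] unfolding \<psi>_def by simp
      have lt: "\<psi> x < inverse (\<bar>C\<bar> + 1)" using y(2) unfolding x(2) \<psi>_def .
      have "inverse (inverse (\<bar>C\<bar> + 1)) < inverse (\<psi> x)"
        by (rule less_imp_inverse_less[OF lt ps])
      then have "\<bar>C\<bar> + 1 < inverse (\<psi> x)" by simp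
      moreover have "\<bar>inverse (\<psi> x)\<bar> \<le> C" using C x(1) by blast
      moreover have "inverse (\<psi> x) \<le> \<bar>inverse (\<psi> x)\<bar>" by (rule abs_ge_self)
      ultimately show False by linarith
    qed
  qed
  then have "closed S" by (simp add: closure_subset_eq)
  then have "compact S" using cK SK closed_Int_compact[of S K] by (simp add: Int_absorb2)
  then have "compact_space (subtopology euclidean S)"
    by (intro compact_space_subtopology) simp
  then have "compact_space X" using hs homeomorphic_compact_space by blast
  with met show ?thesis by blast
qed




lemma all_equiv:
  assumes "base_top X T" "usep X \<Longrightarrow> strip_prop X T"
  shows "(aleph0_bounded X T \<longleftrightarrow> usep X) \<and> (separable_space T \<longleftrightarrow> usep X)
    \<and> (ccc_space T \<longleftrightarrow> usep X) \<and> (Lindelof_space T \<longleftrightarrow> usep X)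
    \<and> (second_countable T \<longleftrightarrow> usep X) \<and> (countable_network T \<longleftrightarrow> usep X)"
proof -
  have sc: "usep X \<Longrightarrow> second_countable T"
    using usep_second_countable[OF assms(1) assms(2)] by blast
  have sep: "separable_space T \<longleftrightarrow> usep X"
    using sc second_countable_imp_separable_space sep_imp_usep[OF assms(1)] by blast
  show ?thesis
  proof (intro conjI)
    show "aleph0_bounded X T \<longleftrightarrow> usep X"
      using ab_imp_usep[OF assms(1)] usep_ab[OF assms(1) assms(2)] by blast
    show "separable_space T \<longleftrightarrow> usep X" by fact
    show "ccc_space T \<longleftrightarrow> usep X"
      using ccc_imp_usep[OF assms(1)] sep separable_imp_ccc by blast
    show "Lindelof_space T \<longleftrightarrow> usep X"
      using Lindelof_imp_usep[OF assms(1)] sc second_countable_imp_Lindelof_space by blast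
    show "second_countable T \<longleftrightarrow> usep X"
      using sc sep second_countable_imp_separable_space by blast
    show "countable_network T \<longleftrightarrow> usep X"
      using sc sep network_imp_separable second_countable_imp_network by blast
  qed
qed

theorem theorem2p4:
  fixes X :: "'a topology"
  assumes "Tychonoff_space X"
  shows "(aleph0_bounded X (Cgamma X) \<longleftrightarrow> aleph0_bounded X (Cm X))
       \<and> (aleph0_bounded X (Cm X) \<longleftrightarrow> aleph0_bounded X (Cu X))
       \<and> (aleph0_bounded X (Cu X) \<longleftrightarrow> separable_space (Cu X))
       \<and> (separable_space (Cu X) \<longleftrightarrow> compact_space X \<and> metrizable_space X)
       \<and> (compact_space X \<and> metrizable_space X \<longleftrightarrow> second_countable (Cgamma X))
       \<and> (second_countable (Cgamma X) \<longleftrightarrow> countable_network (Cgamma X))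
       \<and> (countable_network (Cgamma X) \<longleftrightarrow> separable_space (Cgamma X))
       \<and> (separable_space (Cgamma X) \<longleftrightarrow> ccc_space (Cgamma X))
       \<and> (ccc_space (Cgamma X) \<longleftrightarrow> separable_space (Cm X))
       \<and> (separable_space (Cm X) \<longleftrightarrow> Lindelof_space (Cm X))
       \<and> (Lindelof_space (Cm X) \<longleftrightarrow> ccc_space (Cm X))"
proof -
  have P: "compact_space X \<and> metrizable_space X \<longleftrightarrow> usep X"
    using usep_imp_P[OF assms] P_imp_usep by blast
  have g: "(aleph0_bounded X (Cgamma X) \<longleftrightarrow> usep X) \<and> (separable_space (Cgamma X) \<longleftrightarrow> usep X)
    \<and> (ccc_space (Cgamma X) \<longleftrightarrow> usep X) \<and> (Lindelof_space (Cgamma X) \<longleftrightarrow> usep X)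
    \<and> (second_countable (Cgamma X) \<longleftrightarrow> usep X) \<and> (countable_network (Cgamma X) \<longleftrightarrow> usep X)"
    using P strip_prop_Cgamma by (intro all_equiv base_Cgamma) blast
  have m: "(aleph0_bounded X (Cm X) \<longleftrightarrow> usep X) \<and> (separable_space (Cm X) \<longleftrightarrow> usep X)
    \<and> (ccc_space (Cm X) \<longleftrightarrow> usep X) \<and> (Lindelof_space (Cm X) \<longleftrightarrow> usep X)
    \<and> (second_countable (Cm X) \<longleftrightarrow> usep X) \<and> (countable_network (Cm X) \<longleftrightarrow> usep X)"
    using P strip_prop_Cm by (intro all_equiv base_Cm) blast
  have u: "(aleph0_bounded X (Cu X) \<longleftrightarrow> usep X) \<and> (separable_space (Cu X) \<longleftrightarrow> usep X)
    \<and> (ccc_space (Cu X) \<longleftrightarrow> usep X) \<and> (Lindelof_space (Cu X) \<longleftrightarrow> usep X)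
    \<and> (second_countable (Cu X) \<longleftrightarrow> usep X) \<and> (countable_network (Cu X) \<longleftrightarrow> usep X)"
    using P strip_prop_Cu by (intro all_equiv base_Cu) blast
  show ?thesis using P g m u by simp
qed


end
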